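(* Let $n\ge 1$ and $\tau_i=-2\sin\frac{i\pi}{2n}$ for $0\le i\le n$. Let $\nu_0=\nu_n=\frac1{\sqrt2}$ and $\nu_j=1$ for $1\le j\le n-1$. Let $\bar S\in\mathbb{R}^{n\times n}$ have columns $\bar{\bm s}_1,\dots,\bar{\bm s}_n$, where $\bar{\bm s}_j=\nu_j\big(\sin\frac{j\pi}{2n},\sin\frac{3j\pi}{2n},\dots,\sin\frac{(2n-1)j\pi}{2n}\big)^{\mathsf T}$. Let $\bar C\in\mathbb{R}^{(n+1)\times(n+1)}$ have columns $\bar{\bm c}_0,\dots,\bar{\bm c}_n$, where $\bar{\bm c}_j=\nu_j\big(\frac1{\sqrt2},\cos\frac{j\pi}{n},\dots,\cos\frac{(n-1)j\pi}{n},\frac{(-1)^j}{\sqrt2}\big)^{\mathsf T}$. Let $\bar M=\mathrm{diag}(\sqrt2,1,\dots,1,\sqrt2)\in\mathbb{R}^{(n+1)\times(n+1)}$, and let $\bar B\in\mathbb{R}^{n\times(n+1)}$ have entries $\bar B_{k,k}=-1$, $\bar B_{k,k+1}=1$ ($1\le k\le n$), other entries zero. Then $$\bar S^{-1}\bar B\bar M\bar C=\bar S^{\mathsf T}\bar B\bar M\bar C^{-1}=\bar\Gamma,$$ where $\bar\Gamma=[\bm 0,\underline{\Lambda}]\in\mathbb{R}^{n\times(n+1)}$, $\bm 0$ is the zero column of length $n$, and $\underline{\Lambda}=\mathrm{diag}(\tau_1,\dots,\tau_n)$. *)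

theory Defs
  imports Complex_Main "Jordan_Normal_Form.Matrix"
begin

(* Matrices are Jordan_Normal_Form matrices, indexed from 0.
   Paper index i (1-based rows/cols of S, B) corresponds to i-1 here;
   paper indices 0..n of C, M keep their value. *)

definition tau :: "nat \<Rightarrow> nat \<Rightarrow> real" where
  "tau n i = - 2 * sin (real i * pi / (2 * real n))"

definition nu :: "nat \<Rightarrow> nat \<Rightarrow> real" where
  "nu n j = (if j = 0 \<or> j = n then 1 / sqrt 2 else 1)"

definition Sbar :: "nat \<Rightarrow> real mat" where
  "Sbar n = mat n n (\<lambda>(r, c). nu n (c + 1) *
      sin (real (2 * r + 1) * real (c + 1) * pi / (2 * real n)))"

definition Cbar :: "nat \<Rightarrow> real mat" where
  "Cbar n = mat (n + 1) (n + 1) (\<lambda>(r, j). nu n j *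
      (if r = 0 then 1 / sqrt 2
       else if r = n then (-1) ^ j / sqrt 2
       else cos (real r * real j * pi / real n)))"

definition Mbar :: "nat \<Rightarrow> real mat" where
  "Mbar n = mat (n + 1) (n + 1) (\<lambda>(r, c). if r = c then (if r = 0 \<or> r = n then sqrt 2 else 1) else 0)"

definition Bbar :: "nat \<Rightarrow> real mat" where
  "Bbar n = mat n (n + 1) (\<lambda>(k, c). if c = k then -1 else if c = k + 1 then 1 else 0)"

definition Gammabar :: "nat \<Rightarrow> real mat" where
  "Gammabar n = mat n (n + 1) (\<lambda>(k, c). if c = k + 1 then tau n c else 0)"

definition minv :: "real mat \<Rightarrow> real mat" where
  "minv A = (THE B. B \<in> carrier_mat (dim_row A) (dim_row A) \<and> inverts_mat A B \<and> inverts_mat B A)"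

end

theory Submission imports Defs "Jordan_Normal_Form.Determinant" begin
lemma two_sin_cos: "2 * sin (x::real) * cos z = sin (z + x) - sin (z - x)"
  by (simp add: sin_add sin_diff)

lemma odd_cos_sum: "2 * sin x * (\<Sum>r<n. cos (real (2*r+1) * x)) = sin (real (2*n) * x)"
proof (induction n)
  case 0 then show ?case by simp
next
  case (Suc n)
  have "2 * sin x * cos (real (2*n+1) * x) = sin (real (2*(Suc n)) * x) - sin (real (2*n) * x)"
    unfolding two_sin_cos by (simp add: algebra_simps)
  then show ?case using Suc by (simp add: algebra_simps)
qed

lemma all_cos_sum: "2 * sin (x/2) * (\<Sum>r\<le>n. cos (real r * x)) = sin ((real n + 1/2) * x) + sin (x/2)"
proof (induction n)
  case 0 then show ?case by simp
next
  case (Suc n)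
  have "2 * sin (x/2) * cos (real (Suc n) * x) = sin ((real (Suc n) + 1/2) * x) - sin ((real n + 1/2) * x)"
    unfolding two_sin_cos by (simp add: algebra_simps)
  then show ?case using Suc by (simp add: algebra_simps)
qed

lemma trap_split:
  fixes f :: "nat \<Rightarrow> real" assumes n: "n > 0"
  shows "(\<Sum>r\<le>n. (if r = 0 \<or> r = n then 1/2 else 1) * f r) = (\<Sum>r\<le>n. f r) - f 0 / 2 - f n / 2"
proof -
  have "(\<Sum>r\<le>n. (if r = 0 \<or> r = n then 1/2 else 1) * f r)
       = (\<Sum>r\<le>n. f r - (if r = 0 then f r / 2 else 0) - (if r = n then f r / 2 else 0))"
    using n by (intro sum.cong) auto
  also have "\<dots> = (\<Sum>r\<le>n. f r) - f 0 / 2 - f n / 2"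
    by (simp only: sum_subtractf sum.delta) simp
  finally show ?thesis .
qed

lemma sin_int_pi: "sin (real_of_int m * pi) = 0"
  by (simp add: sin_times_pi_eq_0)

lemma sin_nz:
  fixes m :: int assumes n: "n > 0" and nd: "\<not> (2 * int n) dvd m"
  shows "sin (real_of_int m * pi / (2 * real n)) \<noteq> 0"
proof
  assume "sin (real_of_int m * pi / (2 * real n)) = 0"
  hence "sin ((real_of_int m / (2 * real n)) * pi) = 0" by simp
  hence "real_of_int m / (2 * real n) \<in> \<int>" using sin_times_pi_eq_0 by blast
  then obtain k where k: "real_of_int m / (2 * real n) = real_of_int k" by (auto elim: Ints_cases)
  hence "real_of_int m = real_of_int (2 * int n * k)" using n by (simp add: field_simps)
  hence "m = 2 * int n * k" by linarith
  with nd show False by simp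
qed

lemma odd_sum_zero:
  fixes m :: int assumes n: "n > 0" and nd: "\<not> (2 * int n) dvd m"
  shows "(\<Sum>r<n. cos (real (2*r+1) * (real_of_int m * pi / (2 * real n)))) = 0"
proof -
  let ?x = "real_of_int m * pi / (2 * real n)"
  have "sin (real (2*n) * ?x) = 0" using n sin_int_pi[of m] by simp
  with odd_cos_sum[of ?x n] sin_nz[OF n nd] show ?thesis by simp
qed

lemma trap_sum_zero:
  fixes m :: int assumes n: "n > 0" and nd: "\<not> (2 * int n) dvd m"
  shows "(\<Sum>r\<le>n. (if r = 0 \<or> r = n then 1/2 else 1) * cos (real r * (real_of_int m * pi / real n))) = 0"
proof -
  let ?x = "real_of_int m * pi / real n"
  have hx: "?x / 2 = real_of_int m * pi / (2 * real n)" by simp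
  have snx: "sin (real n * ?x) = 0" using n sin_int_pi[of m] by simp
  have split: "(\<Sum>r\<le>n. (if r = 0 \<or> r = n then 1/2 else 1) * cos (real r * ?x))
     = (\<Sum>r\<le>n. cos (real r * ?x)) - 1/2 - cos (real n * ?x) / 2"
    using trap_split[OF n, of "\<lambda>r. cos (real r * ?x)"] by simp
  have "sin ((real n + 1/2) * ?x) = sin (real n * ?x) * cos (?x/2) + cos (real n * ?x) * sin (?x/2)"
  proof -
    have "(real n + 1/2) * ?x = real n * ?x + ?x/2" using n by (simp add: field_simps)
    then show ?thesis by (simp only: sin_add)
  qed
  hence "2 * sin (?x/2) * ((\<Sum>r\<le>n. cos (real r * ?x)) - 1/2 - cos (real n * ?x) / 2) = 0"
    using all_cos_sum[of ?x n] snx by (simp add: algebra_simps)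
  moreover have "sin (?x/2) \<noteq> 0" using sin_nz[OF n nd] hx by (simp add: mult.commute)
  ultimately have "(\<Sum>r\<le>n. cos (real r * ?x)) - 1/2 - cos (real n * ?x) / 2 = 0"
    by (metis mult_eq_0_iff zero_neq_numeral)
  with split show ?thesis by (simp only:)
qed

lemma ndvd: fixes m d :: int assumes "0 < \<bar>m\<bar>" "\<bar>m\<bar> < d" shows "\<not> d dvd m"
proof
  assume "d dvd m"
  hence "d dvd \<bar>m\<bar>" by simp
  hence "d \<le> \<bar>m\<bar>" using assms(1) by (rule zdvd_imp_le)
  with assms(2) show False by simp
qed
lemma trap_const: assumes n: "n > 0"
  shows "(\<Sum>r\<le>n. (if r = 0 \<or> r = n then 1/2 else 1) * (1::real)) = real n"
  using trap_split[OF n, of "\<lambda>_. 1"] by simp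

lemma orthS:
  assumes i: "1 \<le> i" "i \<le> n" and j: "1 \<le> j" "j \<le> n"
  shows "(\<Sum>k<n. sin (real (2*k+1) * real i * pi / (2 * real n)) * sin (real (2*k+1) * real j * pi / (2 * real n)))
        = (if i = j then (if i = n then real n else real n / 2) else 0)"
proof -
  have n: "n > 0" using i by simp
  define d where "d = int i - int j"
  define s where "s = int i + int j"
  have tm: "sin (real (2*k+1) * real i * pi / (2 * real n)) * sin (real (2*k+1) * real j * pi / (2 * real n))
     = (cos (real (2*k+1) * (real_of_int d * pi / (2 * real n))) - cos (real (2*k+1) * (real_of_int s * pi / (2 * real n)))) / 2" for k
  proof -
    have "real (2*k+1) * real i * pi / (2 * real n) - real (2*k+1) * real j * pi / (2 * real n)
          = real (2*k+1) * (real_of_int d * pi / (2 * real n))"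
      unfolding d_def using n by (simp add: field_simps)
    moreover have "real (2*k+1) * real i * pi / (2 * real n) + real (2*k+1) * real j * pi / (2 * real n)
          = real (2*k+1) * (real_of_int s * pi / (2 * real n))"
      unfolding s_def using n by (simp add: field_simps)
    ultimately show ?thesis by (simp only: sin_times_sin)
  qed
  have sum: "(\<Sum>k<n. sin (real (2*k+1) * real i * pi / (2 * real n)) * sin (real (2*k+1) * real j * pi / (2 * real n)))
        = ((\<Sum>k<n. cos (real (2*k+1) * (real_of_int d * pi / (2 * real n))))
        - (\<Sum>k<n. cos (real (2*k+1) * (real_of_int s * pi / (2 * real n))))) / 2"
    by (simp only: tm sum_subtractf sum_divide_distrib[symmetric])
  have D: "(\<Sum>k<n. cos (real (2*k+1) * (real_of_int d * pi / (2 * real n)))) = (if i = j then real n else 0)"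
  proof (cases "i = j")
    case True then show ?thesis unfolding d_def by simp
  next
    case False
    have "\<not> (2 * int n) dvd d" unfolding d_def using i j False by (intro ndvd) auto
    with odd_sum_zero[OF n] False show ?thesis by simp
  qed
  have S: "(\<Sum>k<n. cos (real (2*k+1) * (real_of_int s * pi / (2 * real n)))) = (if i = j \<and> i = n then - real n else 0)"
  proof (cases "i = j \<and> i = n")
    case True
    have "cos (real (2*k+1) * (real_of_int s * pi / (2 * real n))) = -1" for k
    proof -
      have "s = 2 * int n" unfolding s_def using True by simp
      then have "real (2*k+1) * (real_of_int s * pi / (2 * real n)) = real (2*k+1) * pi"
        using n by (simp add: field_simps)
      then show ?thesis by (simp only: cos_npi) simp
    qed
    then show ?thesis using True by simp
  next
    case False
    have "\<not> (2 * int n) dvd s" unfolding s_def using i j False by (intro ndvd) auto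
    from odd_sum_zero[OF n this] False show ?thesis by (simp only: if_False)
  qed
  show ?thesis unfolding sum D S by auto
qed

lemma orthC:
  assumes n: "n > 0" and i: "i \<le> n" and j: "j \<le> n"
  shows "(\<Sum>r\<le>n. (if r = 0 \<or> r = n then 1/2 else 1) * (cos (real r * real i * pi / real n) * cos (real r * real j * pi / real n)))
        = (if i = j then (if i = 0 \<or> i = n then real n else real n / 2) else 0)"
proof -
  define d where "d = int i - int j"
  define s where "s = int i + int j"
  let ?w = "\<lambda>r::nat. (if r = 0 \<or> r = n then 1/2 else 1::real)"
  have tm: "?w r * (cos (real r * real i * pi / real n) * cos (real r * real j * pi / real n))
     = (?w r * cos (real r * (real_of_int d * pi / real n)) + ?w r * cos (real r * (real_of_int s * pi / real n))) / 2" for r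
  proof -
    have "real r * real i * pi / real n - real r * real j * pi / real n
          = real r * (real_of_int d * pi / real n)"
      unfolding d_def using n by (simp add: field_simps)
    moreover have "real r * real i * pi / real n + real r * real j * pi / real n
          = real r * (real_of_int s * pi / real n)"
      unfolding s_def using n by (simp add: field_simps)
    ultimately show ?thesis by (simp only: cos_times_cos distrib_left add_divide_distrib times_divide_eq_right)
  qed
  have sum: "(\<Sum>r\<le>n. ?w r * (cos (real r * real i * pi / real n) * cos (real r * real j * pi / real n)))
        = ((\<Sum>r\<le>n. ?w r * cos (real r * (real_of_int d * pi / real n)))
        + (\<Sum>r\<le>n. ?w r * cos (real r * (real_of_int s * pi / real n)))) / 2"
    by (simp only: tm sum.distrib sum_divide_distrib[symmetric])
  have D: "(\<Sum>r\<le>n. ?w r * cos (real r * (real_of_int d * pi / real n))) = (if i = j then real n else 0)"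
  proof (cases "i = j")
    case True then show ?thesis unfolding d_def using trap_const[OF n] by simp
  next
    case False
    have "\<not> (2 * int n) dvd d" unfolding d_def using i j False by (intro ndvd) auto
    with trap_sum_zero[OF n] False show ?thesis by simp
  qed
  have S: "(\<Sum>r\<le>n. ?w r * cos (real r * (real_of_int s * pi / real n))) = (if i = j \<and> (i = 0 \<or> i = n) then real n else 0)"
  proof (cases "i = j \<and> (i = 0 \<or> i = n)")
    case True
    have "cos (real r * (real_of_int s * pi / real n)) = 1" for r
    proof -
      have "real r * (real_of_int s * pi / real n) = real (2*r) * pi \<or> real r * (real_of_int s * pi / real n) = 0"
        unfolding s_def using True n by (auto simp add: field_simps)
      then show ?thesis by (metis cos_npi cos_zero power_minus1_even even_mult_iff even_two_times_div_two dvd_triv_left)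
    qed
    then show ?thesis using True trap_const[OF n] by auto
  next
    case False
    have "\<not> (2 * int n) dvd s" unfolding s_def using i j False by (intro ndvd) auto
    from trap_sum_zero[OF n this] False show ?thesis by (simp only: if_False)
  qed
  show ?thesis unfolding sum D S using n by auto
qed
lemma mult_entry:
  assumes "A \<in> carrier_mat a b" "B \<in> carrier_mat b c" "i < a" "j < c"
  shows "(A * B) $$ (i, j) = (\<Sum>l<b. A $$ (i, l) * B $$ (l, j))"
  using assms by (auto simp: scalar_prod_def lessThan_atLeast0 intro!: sum.cong)

lemma minv_eq:
  assumes A: "A \<in> carrier_mat k k" and B: "B \<in> carrier_mat k k"
    and AB: "A * B = 1\<^sub>m k" and BA: "B * A = 1\<^sub>m k"
  shows "minv A = B"
  unfolding minv_def
proof (rule the_equality)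
  show "B \<in> carrier_mat (dim_row A) (dim_row A) \<and> inverts_mat A B \<and> inverts_mat B A"
    using A B AB BA by (auto simp: inverts_mat_def)
next
  fix B' assume h: "B' \<in> carrier_mat (dim_row A) (dim_row A) \<and> inverts_mat A B' \<and> inverts_mat B' A"
  hence B': "B' \<in> carrier_mat k k" and B'A: "B' * A = 1\<^sub>m k" using A by (auto simp: inverts_mat_def)
  have "B' = B' * (A * B)" using AB B' by simp
  also have "\<dots> = (B' * A) * B" using A B B' by simp
  also have "\<dots> = B" using B'A B by simp
  finally show "B' = B" .
qed

lemma invertible_of:
  assumes A: "A \<in> carrier_mat k k" and B: "B \<in> carrier_mat k k"
    and AB: "A * B = 1\<^sub>m k" and BA: "B * A = 1\<^sub>m k"
  shows "invertible_mat A"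
  unfolding invertible_mat_def inverts_mat_def using A B AB BA by (auto simp: square_mat.simps)

lemma nu_sq: "nu n r * nu n r = (if r = 0 \<or> r = n then 1/2 else 1)"
  by (simp add: nu_def)

lemma Sbar_carrier: "Sbar n \<in> carrier_mat n n" by (simp add: Sbar_def)
lemma Cbar_carrier: "Cbar n \<in> carrier_mat (n+1) (n+1)" by (simp add: Cbar_def)
lemma Mbar_carrier: "Mbar n \<in> carrier_mat (n+1) (n+1)" by (simp add: Mbar_def)
lemma Bbar_carrier: "Bbar n \<in> carrier_mat n (n+1)" by (simp add: Bbar_def)
lemma Gammabar_carrier: "Gammabar n \<in> carrier_mat n (n+1)" by (simp add: Gammabar_def)

lemma Cbar_entry:
  assumes n: "n \<ge> 1" and r: "r \<le> n" and j: "j \<le> n"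
  shows "Cbar n $$ (r, j) = nu n r * nu n j * cos (real r * real j * pi / real n)"
proof -
  have "cos (real n * real j * pi / real n) = (-1) ^ j"
    using n by (simp add: cos_npi mult.commute)
  then show ?thesis using r j n by (auto simp: Cbar_def nu_def)
qed

lemma Cbar_dims[simp]: "dim_row (Cbar n) = n+1" "dim_col (Cbar n) = n+1"
  by (simp_all add: Cbar_def)
lemma Sbar_dims[simp]: "dim_row (Sbar n) = n" "dim_col (Sbar n) = n"
  by (simp_all add: Sbar_def)

lemma Cbar_sym: assumes n: "n \<ge> 1" shows "transpose_mat (Cbar n) = Cbar n"
proof (rule eq_matI)
  fix i j assume "i < dim_row (Cbar n)" "j < dim_col (Cbar n)"
  hence ij: "i \<le> n" "j \<le> n" by auto
  have "transpose_mat (Cbar n) $$ (i, j) = Cbar n $$ (j, i)" using ij by (simp add: less_Suc_eq_le)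
  also have "\<dots> = Cbar n $$ (i, j)" using Cbar_entry[OF n] ij by (simp add: mult.commute mult.left_commute)
  finally show "transpose_mat (Cbar n) $$ (i, j) = Cbar n $$ (i, j)" .
qed auto

lemma STS: assumes n: "n \<ge> 1"
  shows "transpose_mat (Sbar n) * Sbar n = (real n / 2) \<cdot>\<^sub>m 1\<^sub>m n"
proof (rule eq_matI)
  fix i j assume "i < dim_row ((real n / 2) \<cdot>\<^sub>m 1\<^sub>m n)" "j < dim_col ((real n / 2) \<cdot>\<^sub>m 1\<^sub>m n)"
  hence ij: "i < n" "j < n" by auto
  have "(transpose_mat (Sbar n) * Sbar n) $$ (i, j) = (\<Sum>l<n. transpose_mat (Sbar n) $$ (i, l) * Sbar n $$ (l, j))"
    by (rule mult_entry[OF _ Sbar_carrier]) (use ij in auto)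
  also have "\<dots> = (\<Sum>l<n. nu n (i+1) * nu n (j+1) * (sin (real (2*l+1) * real (i+1) * pi / (2 * real n)) * sin (real (2*l+1) * real (j+1) * pi / (2 * real n))))"
    using ij by (intro sum.cong) (auto simp: Sbar_def)
  also have "\<dots> = nu n (i+1) * nu n (j+1) * (\<Sum>l<n. sin (real (2*l+1) * real (i+1) * pi / (2 * real n)) * sin (real (2*l+1) * real (j+1) * pi / (2 * real n)))"
    by (simp only: sum_distrib_left)
  also have "\<dots> = nu n (i+1) * nu n (j+1) * (if i+1 = j+1 then (if i+1 = n then real n else real n / 2) else 0)"
    using ij by (subst orthS) auto
  also have "\<dots> = ((real n / 2) \<cdot>\<^sub>m 1\<^sub>m n) $$ (i, j)"
    using ij by (auto simp: nu_def)
  finally show "(transpose_mat (Sbar n) * Sbar n) $$ (i, j) = ((real n / 2) \<cdot>\<^sub>m 1\<^sub>m n) $$ (i, j)" .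
qed auto

lemma CTC: assumes n: "n \<ge> 1"
  shows "transpose_mat (Cbar n) * Cbar n = (real n / 2) \<cdot>\<^sub>m 1\<^sub>m (n+1)"
proof (rule eq_matI)
  fix i j assume "i < dim_row ((real n / 2) \<cdot>\<^sub>m 1\<^sub>m (n+1))" "j < dim_col ((real n / 2) \<cdot>\<^sub>m 1\<^sub>m (n+1))"
  hence ij: "i \<le> n" "j \<le> n" by auto
  have "(transpose_mat (Cbar n) * Cbar n) $$ (i, j) = (\<Sum>l<n+1. transpose_mat (Cbar n) $$ (i, l) * Cbar n $$ (l, j))"
    by (rule mult_entry[OF _ Cbar_carrier]) (use ij in auto)
  also have "\<dots> = (\<Sum>l\<le>n. nu n i * nu n j * ((if l = 0 \<or> l = n then 1/2 else 1) * (cos (real l * real i * pi / real n) * cos (real l * real j * pi / real n))))"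
    unfolding Suc_eq_plus1[symmetric] lessThan_Suc_atMost
    using ij by (intro sum.cong) (auto simp: Cbar_entry[OF n] nu_sq[symmetric])
  also have "\<dots> = nu n i * nu n j * (\<Sum>l\<le>n. (if l = 0 \<or> l = n then 1/2 else 1) * (cos (real l * real i * pi / real n) * cos (real l * real j * pi / real n)))"
    by (simp only: sum_distrib_left)
  also have "\<dots> = nu n i * nu n j * (if i = j then (if i = 0 \<or> i = n then real n else real n / 2) else 0)"
    using ij n by (subst orthC) auto
  also have "\<dots> = ((real n / 2) \<cdot>\<^sub>m 1\<^sub>m (n+1)) $$ (i, j)"
    using ij by (auto simp: nu_def)
  finally show "(transpose_mat (Cbar n) * Cbar n) $$ (i, j) = ((real n / 2) \<cdot>\<^sub>m 1\<^sub>m (n+1)) $$ (i, j)" .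
qed auto

definition mw :: "nat \<Rightarrow> nat \<Rightarrow> real" where
  "mw n r = (if r = 0 \<or> r = n then sqrt 2 else 1)"

lemma BM: "Bbar n * Mbar n = mat n (n+1) (\<lambda>(k, c). if c = k then - mw n c else if c = k + 1 then mw n c else 0)"
proof (rule eq_matI)
  fix k c assume "k < dim_row (mat n (n+1) (\<lambda>(k, c). if c = k then - mw n c else if c = k + 1 then mw n c else 0))"
     "c < dim_col (mat n (n+1) (\<lambda>(k, c). if c = k then - mw n c else if c = k + 1 then mw n c else 0))"
  hence kc: "k < n" "c < n+1" by auto
  have "(Bbar n * Mbar n) $$ (k, c) = (\<Sum>l<n+1. Bbar n $$ (k, l) * Mbar n $$ (l, c))"
    by (rule mult_entry[OF Bbar_carrier Mbar_carrier kc])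
  also have "\<dots> = (\<Sum>l<n+1. if l = c then Bbar n $$ (k, c) * mw n c else 0)"
    using kc by (intro sum.cong) (auto simp: Bbar_def Mbar_def mw_def)
  also have "\<dots> = Bbar n $$ (k, c) * mw n c" using kc by simp
  also have "\<dots> = mat n (n+1) (\<lambda>(k, c). if c = k then - mw n c else if c = k + 1 then mw n c else 0) $$ (k, c)"
    using kc by (simp add: Bbar_def)
  finally show "(Bbar n * Mbar n) $$ (k, c) = mat n (n+1) (\<lambda>(k, c). if c = k then - mw n c else if c = k + 1 then mw n c else 0) $$ (k, c)" .
qed (auto simp: Bbar_def Mbar_def)

lemma mwC: assumes n: "n \<ge> 1" and r: "r \<le> n" and j: "j \<le> n"
  shows "mw n r * Cbar n $$ (r, j) = nu n j * cos (real r * real j * pi / real n)"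
  using r j by (simp add: Cbar_entry[OF n] mw_def nu_def)

lemma cos_step: assumes n: "n \<ge> 1"
  shows "cos (real (k+1) * real j * pi / real n) - cos (real k * real j * pi / real n)
       = tau n j * sin (real (2*k+1) * real j * pi / (2 * real n))"
proof -
  have "cos (real (k+1) * real j * pi / real n) - cos (real k * real j * pi / real n)
     = 2 * sin ((real (k+1) * real j * pi / real n + real k * real j * pi / real n) / 2)
         * sin ((real k * real j * pi / real n - real (k+1) * real j * pi / real n) / 2)"
    by (rule cos_diff_cos)
  also have "(real (k+1) * real j * pi / real n + real k * real j * pi / real n) / 2 = real (2*k+1) * real j * pi / (2 * real n)"
    using n by (simp add: field_simps)
  also have "(real k * real j * pi / real n - real (k+1) * real j * pi / real n) / 2 = - (real j * pi / (2 * real n))"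
    using n by (simp add: field_simps)
  finally show ?thesis by (simp add: tau_def mult.commute mult.left_commute)
qed

lemma BMC: assumes n: "n \<ge> 1"
  shows "Bbar n * Mbar n * Cbar n = mat n (n+1) (\<lambda>(k, j). tau n j * nu n j * sin (real (2*k+1) * real j * pi / (2 * real n)))"
proof (rule eq_matI)
  fix k j assume "k < dim_row (mat n (n+1) (\<lambda>(k, j). tau n j * nu n j * sin (real (2*k+1) * real j * pi / (2 * real n))))"
     "j < dim_col (mat n (n+1) (\<lambda>(k, j). tau n j * nu n j * sin (real (2*k+1) * real j * pi / (2 * real n))))"
  hence kj: "k < n" "j < n+1" by auto
  have BMc: "Bbar n * Mbar n \<in> carrier_mat n (n+1)" by (rule mult_carrier_mat[OF Bbar_carrier Mbar_carrier])
  have "(Bbar n * Mbar n * Cbar n) $$ (k, j) = (\<Sum>l<n+1. (Bbar n * Mbar n) $$ (k, l) * Cbar n $$ (l, j))"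
    by (rule mult_entry[OF BMc Cbar_carrier kj])
  also have "\<dots> = (\<Sum>l<n+1. (if l = k then - (mw n k * Cbar n $$ (k, j)) else 0) + (if l = k + 1 then mw n (k+1) * Cbar n $$ (k+1, j) else 0))"
    unfolding BM using kj by (intro sum.cong) auto
  also have "\<dots> = - (mw n k * Cbar n $$ (k, j)) + mw n (k+1) * Cbar n $$ (k+1, j)"
    using kj by (simp add: sum.distrib)
  also have "\<dots> = nu n j * (cos (real (k+1) * real j * pi / real n) - cos (real k * real j * pi / real n))"
    using kj by (simp add: mwC[OF n] algebra_simps)
  also have "\<dots> = tau n j * nu n j * sin (real (2*k+1) * real j * pi / (2 * real n))"
    unfolding cos_step[OF n] by (simp only: mult.commute mult.left_commute)
  also have "\<dots> = mat n (n+1) (\<lambda>(k, j). tau n j * nu n j * sin (real (2*k+1) * real j * pi / (2 * real n))) $$ (k, j)"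
    using kj by simp
  finally show "(Bbar n * Mbar n * Cbar n) $$ (k, j) = mat n (n+1) (\<lambda>(k, j). tau n j * nu n j * sin (real (2*k+1) * real j * pi / (2 * real n))) $$ (k, j)" .
qed (auto simp: Bbar_def Cbar_def)

lemma STBMC: assumes n: "n \<ge> 1"
  shows "transpose_mat (Sbar n) * (Bbar n * Mbar n * Cbar n) = (real n / 2) \<cdot>\<^sub>m Gammabar n"
proof (rule eq_matI)
  fix i j assume "i < dim_row ((real n / 2) \<cdot>\<^sub>m Gammabar n)" "j < dim_col ((real n / 2) \<cdot>\<^sub>m Gammabar n)"
  hence ij: "i < n" "j < n+1" by (auto simp: Gammabar_def)
  have c: "Bbar n * Mbar n * Cbar n \<in> carrier_mat n (n+1)"
    unfolding BMC[OF n] by simp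
  have "(transpose_mat (Sbar n) * (Bbar n * Mbar n * Cbar n)) $$ (i, j)
      = (\<Sum>l<n. transpose_mat (Sbar n) $$ (i, l) * (Bbar n * Mbar n * Cbar n) $$ (l, j))"
    by (rule mult_entry[OF _ c]) (use ij in auto)
  also have "\<dots> = (\<Sum>l<n. nu n (i+1) * tau n j * nu n j * (sin (real (2*l+1) * real (i+1) * pi / (2 * real n)) * sin (real (2*l+1) * real j * pi / (2 * real n))))"
    using ij by (intro sum.cong) (auto simp: Sbar_def BMC[OF n])
  also have "\<dots> = nu n (i+1) * tau n j * nu n j * (\<Sum>l<n. sin (real (2*l+1) * real (i+1) * pi / (2 * real n)) * sin (real (2*l+1) * real j * pi / (2 * real n)))"
    by (simp only: sum_distrib_left)
  also have "\<dots> = ((real n / 2) \<cdot>\<^sub>m Gammabar n) $$ (i, j)"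
  proof (cases "j = 0")
    case True then show ?thesis using ij by (simp add: Gammabar_def tau_def)
  next
    case False
    then show ?thesis using ij by (subst orthS) (auto simp: Gammabar_def nu_def)
  qed
  finally show "(transpose_mat (Sbar n) * (Bbar n * Mbar n * Cbar n)) $$ (i, j) = ((real n / 2) \<cdot>\<^sub>m Gammabar n) $$ (i, j)" .
qed (auto simp: Gammabar_def Bbar_def Cbar_def)

lemma smult_cancel1: assumes n: "n \<ge> 1"
  shows "(2 / real n) \<cdot>\<^sub>m ((real n / 2) \<cdot>\<^sub>m (A :: real mat)) = A"
  by (rule eq_matI) (use n in auto)

theorem lemma5p1:
  fixes n :: nat
  assumes "n \<ge> 1"
  shows "invertible_mat (Sbar n) \<and> invertible_mat (Cbar n) \<and>
         minv (Sbar n) * Bbar n * Mbar n * Cbar n = Gammabar n \<and>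
         transpose_mat (Sbar n) * Bbar n * Mbar n * minv (Cbar n) = Gammabar n"
proof -
  note n = assms
  define Si where "Si = (2 / real n) \<cdot>\<^sub>m transpose_mat (Sbar n)"
  define Ci where "Ci = (2 / real n) \<cdot>\<^sub>m Cbar n"
  have S: "Sbar n \<in> carrier_mat n n" by (rule Sbar_carrier)
  have St: "transpose_mat (Sbar n) \<in> carrier_mat n n" using S by simp
  have C: "Cbar n \<in> carrier_mat (n+1) (n+1)" by (rule Cbar_carrier)
  have B: "Bbar n \<in> carrier_mat n (n+1)" by (rule Bbar_carrier)
  have M: "Mbar n \<in> carrier_mat (n+1) (n+1)" by (rule Mbar_carrier)
  have Si: "Si \<in> carrier_mat n n" using St unfolding Si_def by simp
  have Ci: "Ci \<in> carrier_mat (n+1) (n+1)" using C unfolding Ci_def by simp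
  have SiS: "Si * Sbar n = 1\<^sub>m n"
    unfolding Si_def by (simp add: mult_smult_assoc_mat[OF St S] STS[OF n] smult_cancel1[OF n])
  have SSi: "Sbar n * Si = 1\<^sub>m n" by (rule mat_mult_left_right_inverse[OF Si S SiS])
  have CC: "Cbar n * Cbar n = (real n / 2) \<cdot>\<^sub>m 1\<^sub>m (n+1)"
    using CTC[OF n] Cbar_sym[OF n] by simp
  have CiC: "Ci * Cbar n = 1\<^sub>m (n+1)"
    unfolding Ci_def by (simp add: mult_smult_assoc_mat[OF C C] CC smult_cancel1[OF n])
  have CCi: "Cbar n * Ci = 1\<^sub>m (n+1)"
    unfolding Ci_def by (simp add: mult_smult_distrib[OF C C] CC smult_cancel1[OF n])
  have mS: "minv (Sbar n) = Si" by (rule minv_eq[OF S Si SSi SiS])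
  have mC: "minv (Cbar n) = Ci" by (rule minv_eq[OF C Ci CCi CiC])
  have iS: "invertible_mat (Sbar n)" by (rule invertible_of[OF S Si SSi SiS])
  have iC: "invertible_mat (Cbar n)" by (rule invertible_of[OF C Ci CCi CiC])
  have BM: "Bbar n * Mbar n \<in> carrier_mat n (n+1)" by (rule mult_carrier_mat[OF B M])
  have g3: "Si * Bbar n * Mbar n * Cbar n = Gammabar n"
  proof -
    have "Si * Bbar n * Mbar n * Cbar n = Si * (Bbar n * Mbar n * Cbar n)"
      by (simp only: assoc_mult_mat[OF Si B M] assoc_mult_mat[OF Si BM C])
    also have "\<dots> = (2 / real n) \<cdot>\<^sub>m (transpose_mat (Sbar n) * (Bbar n * Mbar n * Cbar n))"
      unfolding Si_def by (rule mult_smult_assoc_mat[OF St mult_carrier_mat[OF BM C]])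
    also have "\<dots> = Gammabar n" by (simp add: STBMC[OF n] smult_cancel1[OF n])
    finally show ?thesis .
  qed
  have g4: "transpose_mat (Sbar n) * Bbar n * Mbar n * Ci = Gammabar n"
  proof -
    have X: "transpose_mat (Sbar n) * Bbar n * Mbar n \<in> carrier_mat n (n+1)" using St B M by simp
    have "transpose_mat (Sbar n) * Bbar n * Mbar n * Ci = (2 / real n) \<cdot>\<^sub>m (transpose_mat (Sbar n) * Bbar n * Mbar n * Cbar n)"
      unfolding Ci_def by (rule mult_smult_distrib[OF X C])
    also have "transpose_mat (Sbar n) * Bbar n * Mbar n * Cbar n = transpose_mat (Sbar n) * (Bbar n * Mbar n * Cbar n)"
      by (simp only: assoc_mult_mat[OF St B M] assoc_mult_mat[OF St BM C])
    also have "(2 / real n) \<cdot>\<^sub>m \<dots> = Gammabar n" by (simp add: STBMC[OF n] smult_cancel1[OF n])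
    finally show ?thesis .
  qed
  show ?thesis using iS iC g3 g4 mS mC by simp
qed

end
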